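(* Let $n$ be a positive integer and let $i,j$ be integers with $1\leq i\leq j-2\leq n-2$. Then for all permutations $p$ of length $n$, $c_i(c_j(p))=c_j(c_i(p))$.
   Context: For a string $s$ of distinct integers with underlying set $S$, the complement of $s$ relative to $S$ is the string obtained from $s$ by replacing, for each $j$, the $j$th smallest element of $S$ by the $j$th largest element of $S$. For $1\leq i\leq n$, $c_i$ is the map on permutations $p=p_1p_2\cdots p_n$ of length $n$ that leaves $p_1\cdots p_{i-1}$ unchanged and replaces the string $p_ip_{i+1}\cdots p_n$ by its complement relative to its underlying set $\{p_i,\dots,p_n\}$. *)

theory Defs
  imports Main
begin

definition is_perm :: "nat \<Rightarrow> nat list \<Rightarrow> bool" where
  "is_perm n p \<longleftrightarrow> distinct p \<and> set p = {1..n}"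

text \<open>Complement of a string s of distinct integers relative to its underlying set S:
  the element with exactly r smaller elements in S (the (r+1)-th smallest) is replaced
  by the (r+1)-th largest element of S.\<close>
definition complement :: "nat list \<Rightarrow> nat list" where
  "complement s = (let L = sorted_list_of_set (set s); k = length L in
     map (\<lambda>x. L ! (k - 1 - card {y \<in> set s. y < x})) s)"

definition c_map :: "nat \<Rightarrow> nat list \<Rightarrow> nat list" where
  "c_map i p = take (i - 1) p @ complement (drop (i - 1) p)"

end

theory Submission
  imports Defs
begin

definition rk :: "nat set \<Rightarrow> nat \<Rightarrow> nat" where
  "rk S x = card {y \<in> S. y < x}"

definition phi :: "nat set \<Rightarrow> nat \<Rightarrow> nat" where
  "phi S x = sorted_list_of_set S ! (card S - 1 - rk S x)"

lemma complement_phi: "complement s = map (phi (set s)) s"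
  by (simp add: complement_def phi_def rk_def Let_def)

lemma rk_less_card: "finite S \<Longrightarrow> x \<in> S \<Longrightarrow> rk S x < card S"
  unfolding rk_def by (rule psubset_card_mono) auto

lemma rk_mono: "finite S \<Longrightarrow> x \<in> S \<Longrightarrow> y \<in> S \<Longrightarrow> x < y \<Longrightarrow> rk S x < rk S y"
  unfolding rk_def by (rule psubset_card_mono) auto

lemma rk_inj: "finite S \<Longrightarrow> x \<in> S \<Longrightarrow> y \<in> S \<Longrightarrow> rk S x = rk S y \<Longrightarrow> x = y"
  using rk_mono[of S x y] rk_mono[of S y x] by (cases x y rule: linorder_cases) auto

lemma phi_in: assumes "finite S" "x \<in> S" shows "phi S x \<in> S"
proof -
  have "rk S x < card S" using rk_less_card assms by auto
  have "card S > 0" using assms card_gt_0_iff by blast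
  then have "card S - 1 - rk S x < length (sorted_list_of_set S)" using assms by simp
  then have "phi S x \<in> set (sorted_list_of_set S)" unfolding phi_def by (rule nth_mem)
  then show ?thesis using assms by simp
qed

lemma phi_anti: assumes "finite S" "x \<in> S" "y \<in> S" "x < y" shows "phi S y < phi S x"
proof -
  have a: "rk S x < rk S y" "rk S y < card S" using rk_mono rk_less_card assms by auto
  let ?L = "sorted_list_of_set S"
  have "sorted_wrt (<) ?L" by simp
  moreover have "card S - 1 - rk S y < card S - 1 - rk S x" "card S - 1 - rk S x < length ?L"
    using a by auto
  ultimately show ?thesis unfolding phi_def using sorted_wrt_nth_less by blast
qed

lemma anti_inj: fixes S :: "nat set" assumes "\<And>x y. x \<in> S \<Longrightarrow> y \<in> S \<Longrightarrow> x < y \<Longrightarrow> f y < (f x::nat)"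
  shows "inj_on f S"
proof (rule inj_onI)
  fix x y assume "x \<in> S" "y \<in> S" "f x = f y"
  then show "x = y" using assms[of x y] assms[of y x] by (cases x y rule: linorder_cases) auto
qed

lemma phi_bij: assumes "finite S" shows "bij_betw (phi S) S S"
proof -
  have inj: "inj_on (phi S) S" by (rule anti_inj) (use phi_anti assms in auto)
  have sub: "phi S ` S \<subseteq> S" using phi_in assms by auto
  have "card (phi S ` S) = card S" using card_image inj by blast
  then have "phi S ` S = S" using card_subset_eq[OF assms sub] by simp
  then show ?thesis using inj bij_betw_def by blast
qed

lemma rk_anti: assumes "finite S" "bij_betw f S S'" "\<And>x y. x \<in> S \<Longrightarrow> y \<in> S \<Longrightarrow> x < y \<Longrightarrow> f y < (f x::nat)"
  "x \<in> S"
  shows "rk S' (f x) = card S - 1 - rk S x"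
proof -
  have img: "{y \<in> S'. y < f x} = f ` {z \<in> S. x < z}"
  proof
    show "f ` {z \<in> S. x < z} \<subseteq> {y \<in> S'. y < f x}" using assms bij_betwE by fastforce
    show "{y \<in> S'. y < f x} \<subseteq> f ` {z \<in> S. x < z}"
    proof
      fix y assume y: "y \<in> {y \<in> S'. y < f x}"
      then obtain z where z: "z \<in> S" "y = f z" using y assms(2) unfolding bij_betw_def by auto
      have "x < z" using assms(3)[of z x] z y assms(4) by (cases x z rule: linorder_cases) auto
      then show "y \<in> f ` {z \<in> S. x < z}" using z by auto
    qed
  qed
  have inj: "inj_on f S" using assms(2) bij_betw_def by blast
  have c1: "card {y \<in> S'. y < f x} = card {z \<in> S. x < z}"
    unfolding img by (rule card_image) (use inj in \<open>auto intro: inj_on_subset\<close>)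
  have split: "S = {z \<in> S. z < x} \<union> {x} \<union> {z \<in> S. x < z}" using assms(4) by auto
  have "card S = card {z \<in> S. z < x} + 1 + card {z \<in> S. x < z}"
  proof -
    have e1: "card ({z \<in> S. z < x} \<union> {x} \<union> {z \<in> S. x < z}) = card ({z \<in> S. z < x} \<union> {x}) + card {z \<in> S. x < z}"
      by (rule card_Un_disjoint) (use assms(1) in auto)
    have e2: "card ({z \<in> S. z < x} \<union> {x}) = card {z \<in> S. z < x} + 1" using assms(1) by simp
    have e3: "card S = card ({z \<in> S. z < x} \<union> {x} \<union> {z \<in> S. x < z})"
      using split by (rule arg_cong)
    show ?thesis using e1 e2 e3 by linarith
  qed
  then show ?thesis using c1 unfolding rk_def by simp
qed

lemma key: assumes "finite S" "T \<subseteq> S" "t \<in> T"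
  shows "phi S (phi T t) = phi (phi S ` T) (phi S t)"
proof -
  have fT: "finite T" using finite_subset[OF assms(2,1)] .
  let ?S' = "phi S ` T"
  have fS': "finite ?S'" using fT by simp
  have bST: "bij_betw (phi S) T ?S'"
    unfolding bij_betw_def using inj_on_subset[OF bij_betw_imp_inj_on[OF phi_bij[OF assms(1)]] assms(2)] by simp
  have antiST: "\<And>x y. x \<in> T \<Longrightarrow> y \<in> T \<Longrightarrow> x < y \<Longrightarrow> phi S y < phi S x"
    using phi_anti[OF assms(1)] assms(2) by auto
  have cS': "card ?S' = card T" using bij_betw_same_card[OF bST] by simp
  have tT: "phi T t \<in> T" using phi_in[OF fT assms(3)] .
  have r1: "rk ?S' (phi S (phi T t)) = card T - 1 - rk T (phi T t)"
    using rk_anti[OF fT bST antiST tT] .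
  have r2: "rk T (phi T t) = card T - 1 - rk T t"
    using rk_anti[OF fT phi_bij[OF fT] phi_anti[OF fT] assms(3)] .
  have r3: "rk ?S' (phi S t) = card T - 1 - rk T t"
    using rk_anti[OF fT bST antiST assms(3)] .
  have sin: "phi S t \<in> ?S'" using assms(3) by simp
  have r4: "rk ?S' (phi ?S' (phi S t)) = card T - 1 - rk ?S' (phi S t)"
    using rk_anti[OF fS' phi_bij[OF fS'] phi_anti[OF fS'] sin] cS' by simp
  have lt: "rk T t < card T" using rk_less_card[OF fT assms(3)] .
  have "rk ?S' (phi S (phi T t)) = rk ?S' (phi ?S' (phi S t))"
    using r1 r2 r3 r4 lt cS' by simp
  moreover have "phi S (phi T t) \<in> ?S'" using tT by simp
  moreover have "phi ?S' (phi S t) \<in> ?S'" using phi_in[OF fS' sin] .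
  ultimately show ?thesis using rk_inj[OF fS'] by metis
qed

theorem mainTheorem2:
  fixes n i j :: nat and p :: "nat list"
  assumes "n \<ge> 1" and "1 \<le> i" and "i + 2 \<le> j" and "j \<le> n"
    and "is_perm n p"
  shows "c_map i (c_map j p) = c_map j (c_map i p)"
proof -
  have len: "length p = n" using assms(5) distinct_card[of p] unfolding is_perm_def by simp
  define a where "a = i - 1"
  define b where "b = j - 1"
  have ab: "a \<le> b" "b \<le> length p" using assms len a_def b_def by auto
  define B where "B = drop a (take b p)"
  define C where "C = drop b p"
  define S where "S = set B \<union> set C"
  define T where "T = set C"
  have fS: "finite S" and TS: "T \<subseteq> S" using S_def T_def by auto
  have dp: "drop a p = B @ C"
  proof -
    have "drop b p = drop (b - a) (drop a p)" using ab by simp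
    then have "B @ C = take (b - a) (drop a p) @ drop (b - a) (drop a p)"
      unfolding B_def C_def by (simp add: drop_take)
    then show ?thesis by (metis append_take_drop_id)
  qed
  have ta: "take a (take b p) = take a p" using ab by (simp add: min.absorb1)
  have lta: "length (take a (take b p)) = a" using ab by simp
  have phiT: "phi T ` T = T" using phi_bij[of T] T_def by (simp add: bij_betw_def)
  have L: "c_map i (c_map j p) = take a p @ map (phi S) B @ map (phi S \<circ> phi T) C"
  proof -
    have "c_map j p = take b p @ map (phi T) C"
      unfolding c_map_def complement_phi b_def[symmetric] C_def T_def ..
    moreover have "set (B @ map (phi T) C) = S" using phiT S_def T_def by auto
    moreover have "take a (take b p @ X) = take a p" for X using ab by simp
    moreover have "drop a (take b p @ X) = B @ X" for X using ab B_def by simp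
    ultimately show ?thesis unfolding c_map_def complement_phi a_def[symmetric] by simp
  qed
  have R: "c_map j (c_map i p) = take a p @ map (phi S) B @ map (phi (phi S ` T) \<circ> phi S) C"
  proof -
    have ci: "c_map i p = (take a p @ map (phi S) B) @ map (phi S) C"
      unfolding c_map_def complement_phi a_def[symmetric] dp S_def by simp
    have l: "length (take a p @ map (phi S) B) = b" using ab B_def by simp
    have "set (map (phi S) C) = phi S ` T" using T_def by simp
    moreover have "c_map j X = take b X @ complement (drop b X)" for X unfolding c_map_def b_def ..
    ultimately show ?thesis unfolding ci using l
      using ab by (simp add: complement_phi min_absorb2)
  qed
  have "map (phi S \<circ> phi T) C = map (phi (phi S ` T) \<circ> phi S) C"
    using key[OF fS TS] T_def by auto
  then show ?thesis using L R by simp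
qed

end
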